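(* Let $\mathcal{D}_1=\{(z_1,z_2)\in\mathbb{C}^2: 1+|z_1|^2-|z_2|^2>|1+z_1^2-z_2^2|,\ \mathrm{Im}(z_1(1+\overline{z_2}))>0\}$ and $\mathcal{H}=\{(z_1,z_2)\in\mathbb{C}^2:\mathrm{Im}(z_1)>0,\ z_2\notin(-\infty,-1]\cup[1,\infty)\}$. Then $\mathcal{D}_1\subset\mathcal{H}$, and if $(z_1,z_2)\in\mathcal{D}_1$ then $(z_1,0)\in\mathcal{D}_1$. *)

theory Defs
  imports Complex_Main
begin

definition D1 :: "(complex \<times> complex) set" where
  "D1 = {(z1, z2). 1 + (cmod z1)^2 - (cmod z2)^2 > cmod (1 + z1^2 - z2^2)
                 \<and> Im (z1 * (1 + cnj z2)) > 0}"

definition H :: "(complex \<times> complex) set" where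
  "H = {(z1, z2). Im z1 > 0 \<and>
          z2 \<notin> complex_of_real ` ({..-1} \<union> {1..})}"

end

theory Submission
  imports Defs
begin

lemma cmod_sq: "(cmod w)^2 = (Re w)^2 + (Im w)^2"
  by (simp add: cmod_def)

lemma key:
  assumes "1 + (cmod z1)^2 - (cmod z2)^2 > cmod (1 + z1^2 - z2^2)"
  shows "(Im z1)^2 > (Im z2)^2 + (Re z1 * Im z2 - Im z1 * Re z2)^2"
proof -
  define a b c d where "a = Re z1" "b = Im z1" "c = Re z2" "d = Im z2"
  define S where "S = 1 + (cmod z1)^2 - (cmod z2)^2"
  have S: "S = 1 + a^2 + b^2 - c^2 - d^2" unfolding S_def a_b_c_d_def cmod_sq by simp
  have q: "(cmod (1 + z1^2 - z2^2))^2 = (1 + a^2 - b^2 - c^2 + d^2)^2 + (2*a*b - 2*c*d)^2"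
    unfolding cmod_sq a_b_c_d_def by (simp add: power2_eq_square algebra_simps)
  have "(cmod (1 + z1^2 - z2^2))^2 < S^2"
    using assms unfolding S_def by (intro power_strict_mono) auto
  hence "(1 + a^2 - b^2 - c^2 + d^2)^2 + (2*a*b - 2*c*d)^2 < (1 + a^2 + b^2 - c^2 - d^2)^2"
    using q S by simp
  hence "0 < (1 + a^2 + b^2 - c^2 - d^2)^2 - (1 + a^2 - b^2 - c^2 + d^2)^2 - (2*a*b - 2*c*d)^2" by simp
  also have "\<dots> = 4 * (b^2 - d^2 - (a*d - b*c)^2)" by (simp add: power2_eq_square algebra_simps)
  finally show ?thesis unfolding a_b_c_d_def by simp
qed

lemma impos:
  assumes K: "(b::real)^2 > d^2 + (a*d - b*c)^2" and B: "b*(1+c) - a*d > 0"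
  shows "b > 0"
proof (rule ccontr)
  assume "\<not> b > 0"
  hence "b \<le> 0" by simp
  have "a*d - b*c < b" using B by (simp add: algebra_simps)
  hence "b^2 \<le> (a*d - b*c)^2" using \<open>b \<le> 0\<close>
  proof -
    have "-b \<le> -(a*d - b*c)" using \<open>a*d - b*c < b\<close> by simp
    hence "(-b)^2 \<le> (-(a*d - b*c))^2" using \<open>b \<le> 0\<close> by (intro power_mono) auto
    thus ?thesis by (simp add: power2_commute)
  qed
  moreover have "d^2 \<ge> 0" by simp
  ultimately show False using K by linarith
qed

lemma Bform: "Im (z1 * (1 + cnj z2)) = Im z1 * (1 + Re z2) - Re z1 * Im z2"
  by (simp add: algebra_simps)

lemma in_D1: "(z1, z2) \<in> D1 \<Longrightarrow> Im z1 > 0"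
proof -
  assume "(z1, z2) \<in> D1"
  hence A: "1 + (cmod z1)^2 - (cmod z2)^2 > cmod (1 + z1^2 - z2^2)"
    and B: "Im (z1 * (1 + cnj z2)) > 0" unfolding D1_def by auto
  show ?thesis using impos[OF key[OF A]] B unfolding Bform by blast
qed

lemma zero_in: assumes "Im z1 > 0" shows "(z1, 0) \<in> D1"
proof -
  define a b where "a = Re z1" "b = Im z1"
  have q: "(cmod (1 + z1^2))^2 = (1 + a^2 - b^2)^2 + (2*a*b)^2"
    unfolding cmod_sq a_b_def by (simp add: power2_eq_square algebra_simps)
  have S: "1 + (cmod z1)^2 = 1 + a^2 + b^2" unfolding cmod_sq a_b_def by simp
  have "(1 + a^2 + b^2)^2 - ((1 + a^2 - b^2)^2 + (2*a*b)^2) = 4*b^2"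
    by (simp add: power2_eq_square algebra_simps)
  moreover have "b^2 > 0" using assms a_b_def by simp
  ultimately have "(cmod (1 + z1^2))^2 < (1 + (cmod z1)^2)^2" using q S by (simp only:)
  hence "cmod (1 + z1^2) < 1 + (cmod z1)^2"
    by (rule power_less_imp_less_base) auto
  thus ?thesis unfolding D1_def using assms by simp
qed

theorem lemma3p1:
  shows "D1 \<subseteq> H \<and> (\<forall>z1 z2. (z1, z2) \<in> D1 \<longrightarrow> (z1, 0) \<in> D1)"
proof
  show "\<forall>z1 z2. (z1, z2) \<in> D1 \<longrightarrow> (z1, 0) \<in> D1" using in_D1 zero_in by blast
  show "D1 \<subseteq> H"
  proof
    fix p assume p: "p \<in> D1"
    obtain z1 z2 where pz: "p = (z1, z2)" by fastforce
    have b: "Im z1 > 0" using in_D1 p pz by simp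
    have K: "(Im z1)^2 > (Im z2)^2 + (Re z1 * Im z2 - Im z1 * Re z2)^2"
      using p pz key unfolding D1_def by simp
    have "z2 \<notin> complex_of_real ` ({..-1} \<union> {1..})"
    proof
      assume "z2 \<in> complex_of_real ` ({..-1} \<union> {1..})"
      then obtain t where t: "z2 = complex_of_real t" "t \<le> -1 \<or> t \<ge> 1" by auto
      have "t^2 \<ge> 1" using t(2) 
      proof (cases "t \<ge> 1")
        case True thus ?thesis using power_mono[of 1 t 2] by simp
      next
        case False hence "-t \<ge> 1" using t(2) by simp
        thus ?thesis using power_mono[of 1 "-t" 2] by simp
      qed
      have "(Im z1)^2 > (Im z1 * t)^2" using K t(1) by simp
      hence "(Im z1)^2 * 1 > (Im z1)^2 * t^2" by (simp add: power_mult_distrib)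
      moreover have "(Im z1)^2 * 1 \<le> (Im z1)^2 * t^2" using \<open>t^2 \<ge> 1\<close> by (intro mult_left_mono) auto
      ultimately show False by simp
    qed
    thus "p \<in> H" using b pz unfolding H_def by simp
  qed
qed

end
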